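(* Let $h$ be a smooth function on a neighborhood of $(0,0)$ whose Taylor expansion at $(0,0)$ is $h(x,y)=a^2x^2+b^2y^2+\sum_{m+n\ge3}h_{m,n}x^my^n$, where $a,b>0$ are linearly independent over $\mathbb{Q}$. Then there is a unique formal power series $z(x,y)=\frac12(ax^2-by^2)+\sum_{m+n\ge3}z_{m,n}x^my^n$ satisfying $z_x^2+z_y^2=h$ as formal power series. *)

theory Defs
  imports Complex_Main
begin

text \<open>Formal power series in two variables x, y over the reals, represented by
  their coefficient arrays: f m n is the coefficient of x^m y^n.\<close>
type_synonym fps2 = "nat \<Rightarrow> nat \<Rightarrow> real"

definition fps2_dx :: "fps2 \<Rightarrow> fps2" where
  "fps2_dx f m n = real (m + 1) * f (m + 1) n"

definition fps2_dy :: "fps2 \<Rightarrow> fps2" where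
  "fps2_dy f m n = real (n + 1) * f m (n + 1)"

definition fps2_mult :: "fps2 \<Rightarrow> fps2 \<Rightarrow> fps2" where
  "fps2_mult f g m n = (\<Sum>i\<le>m. \<Sum>j\<le>n. f i j * g (m - i) (n - j))"

definition fps2_add :: "fps2 \<Rightarrow> fps2 \<Rightarrow> fps2" where
  "fps2_add f g m n = f m n + g m n"

definition rat_lin_indep2 :: "real \<Rightarrow> real \<Rightarrow> bool" where
  "rat_lin_indep2 a b \<longleftrightarrow>
     (\<forall>p q :: rat. of_rat p * a + of_rat q * b = 0 \<longrightarrow> p = 0 \<and> q = 0)"

end

theory Submission
  imports Defs
begin

definition B :: "fps2 \<Rightarrow> fps2 \<Rightarrow> fps2" where
  "B f g = fps2_add (fps2_mult (fps2_dx f) (fps2_dx g)) (fps2_mult (fps2_dy f) (fps2_dy g))"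

definition sg :: "nat \<Rightarrow> fps2 \<Rightarrow> bool" where
  "sg k f \<longleftrightarrow> (\<forall>i j. i + j < k \<longrightarrow> f i j = 0)"

definition Lz :: "real \<Rightarrow> real \<Rightarrow> fps2" where
  "Lz a b = (\<lambda>i j. if i = 2 \<and> j = 0 then a / 2 else if i = 0 \<and> j = 2 then - b / 2 else 0)"

lemma sum_rev_atMost: "(\<Sum>i\<le>m. F i) = (\<Sum>i\<le>m. F (m - i))" for F :: "nat \<Rightarrow> real"
  using sum.atLeastAtMost_rev[of F 0 m] by (simp add: atLeast0AtMost)

lemma mult_comm: "fps2_mult f g = fps2_mult g f"
proof (intro ext)
  fix m n
  have "fps2_mult f g m n = (\<Sum>i\<le>m. \<Sum>j\<le>n. f (m - i) (n - j) * g (m - (m - i)) (n - (n - j)))"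
    unfolding fps2_mult_def
    by (subst sum_rev_atMost, rule sum.cong, simp, subst sum_rev_atMost, simp)
  also have "\<dots> = fps2_mult g f m n"
    unfolding fps2_mult_def by (intro sum.cong refl) (simp add: mult.commute)
  finally show "fps2_mult f g m n = fps2_mult g f m n" .
qed

lemma mult_add_left: "fps2_mult (fps2_add f g) k m n = fps2_mult f k m n + fps2_mult g k m n"
  by (simp add: fps2_mult_def fps2_add_def distrib_right sum.distrib)

lemma mult_add_right: "fps2_mult k (fps2_add f g) m n = fps2_mult k f m n + fps2_mult k g m n"
  by (simp add: fps2_mult_def fps2_add_def distrib_left sum.distrib)

lemma dx_add: "fps2_dx (fps2_add f g) = fps2_add (fps2_dx f) (fps2_dx g)"
  by (simp add: fun_eq_iff fps2_dx_def fps2_add_def distrib_left)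

lemma dy_add: "fps2_dy (fps2_add f g) = fps2_add (fps2_dy f) (fps2_dy g)"
  by (simp add: fun_eq_iff fps2_dy_def fps2_add_def distrib_left)

definition E :: "fps2 \<Rightarrow> fps2" where
  "E z = fps2_add (fps2_mult (fps2_dx z) (fps2_dx z)) (fps2_mult (fps2_dy z) (fps2_dy z))"

lemma E_add: "E (fps2_add f g) m n = E f m n + B f g m n + B g f m n + E g m n"
  unfolding E_def B_def dx_add dy_add
  by (simp add: fps2_add_def mult_add_left mult_add_right)

lemma sg_dx: "sg k f \<Longrightarrow> sg (k - 1) (fps2_dx f)"
  by (simp add: sg_def fps2_dx_def)

lemma sg_dy: "sg k f \<Longrightarrow> sg (k - 1) (fps2_dy f)"
  by (simp add: sg_def fps2_dy_def)

lemma sg_mult: "sg k f \<Longrightarrow> sg l g \<Longrightarrow> m + n < k + l \<Longrightarrow> fps2_mult f g m n = 0"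
  unfolding fps2_mult_def
proof (intro sum.neutral ballI)
  fix i j assume f: "sg k f" and g: "sg l g" and mn: "m + n < k + l" and i: "i \<in> {..m}" and j: "j \<in> {..n}"
  show "f i j * g (m - i) (n - j) = 0"
  proof (cases "i + j < k")
    case True then show ?thesis using f by (simp add: sg_def)
  next
    case False then have "(m - i) + (n - j) < l" using mn i j by auto
    then show ?thesis using g by (simp add: sg_def)
  qed
qed

lemma sg_B: "sg k f \<Longrightarrow> sg l g \<Longrightarrow> m + n + 2 < k + l \<Longrightarrow> B f g m n = 0"
  unfolding B_def fps2_add_def
  using sg_mult[OF sg_dx sg_dx, of k f l g m n] sg_mult[OF sg_dy sg_dy, of k f l g m n] by simp

lemma mono10: "fps2_mult (\<lambda>i j. if i = 1 \<and> j = 0 then c else 0) g m n = (if 1 \<le> m then c * g (m - 1) n else 0)"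
proof -
  have "fps2_mult (\<lambda>i j. if i = 1 \<and> j = 0 then c else 0) g m n =
     (\<Sum>i\<le>m. if i = 1 then c * g (m - 1) n else 0)"
    unfolding fps2_mult_def
  proof (rule sum.cong[OF refl])
    fix i assume "i \<in> {..m}"
    show "(\<Sum>j\<le>n. (if i = 1 \<and> j = 0 then c else 0) * g (m - i) (n - j)) = (if i = 1 then c * g (m - 1) n else 0)"
      by (cases "i = 1") (simp_all add: if_distrib[where f="\<lambda>x. x * _"] sum.delta cong: if_cong)
  qed
  also have "\<dots> = (if 1 \<le> m then c * g (m - 1) n else 0)"
    by (simp add: sum.delta)
  finally show ?thesis .
qed

lemma mono01: "fps2_mult (\<lambda>i j. if i = 0 \<and> j = 1 then c else 0) g m n = (if 1 \<le> n then c * g m (n - 1) else 0)"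
proof -
  have "fps2_mult (\<lambda>i j. if i = 0 \<and> j = 1 then c else 0) g m n =
     (\<Sum>i\<le>m. if i = 0 then (if 1 \<le> n then c * g m (n - 1) else 0) else 0)"
    unfolding fps2_mult_def
  proof (rule sum.cong[OF refl])
    fix i assume "i \<in> {..m}"
    show "(\<Sum>j\<le>n. (if i = 0 \<and> j = 1 then c else 0) * g (m - i) (n - j)) = (if i = 0 then (if 1 \<le> n then c * g m (n - 1) else 0) else 0)"
      by (cases "i = 0") (simp_all add: if_distrib[where f="\<lambda>x. x * _"] sum.delta cong: if_cong)
  qed
  also have "\<dots> = (if 1 \<le> n then c * g m (n - 1) else 0)"
    by (simp add: sum.delta)
  finally show ?thesis .
qed


lemma Lz_zero: "3 \<le> i + j \<Longrightarrow> Lz a b i j = 0"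
  by (auto simp: Lz_def)

lemma dxL: "fps2_dx (Lz a b) = (\<lambda>i j. if i = 1 \<and> j = 0 then a else 0)"
  by (auto simp: fun_eq_iff fps2_dx_def Lz_def)

lemma dyL: "fps2_dy (Lz a b) = (\<lambda>i j. if i = 0 \<and> j = 1 then - b else 0)"
  by (auto simp: fun_eq_iff fps2_dy_def Lz_def)

lemma BL: "B (Lz a b) g m n = (a * real m - b * real n) * g m n"
  unfolding B_def fps2_add_def dxL dyL mono10 mono01
  by (cases m; cases n) (auto simp: fps2_dx_def fps2_dy_def algebra_simps)

lemma B_comm: "B f g = B g f"
  unfolding B_def by (simp add: mult_comm)

lemma BL': "B g (Lz a b) m n = (a * real m - b * real n) * g m n"
  using BL by (simp add: B_comm)

lemma E_B: "E f = B f f"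
  by (simp add: E_def B_def)

lemma EL: "E (Lz a b) m n = (if m = 2 \<and> n = 0 then a^2 else if m = 0 \<and> n = 2 then b^2 else 0)"
  unfolding E_def fps2_add_def dxL dyL mono10 mono01
  by (auto simp: power2_eq_square)

lemma add_split: "fps2_add f (\<lambda>i j. z i j - f i j) = z"
  by (simp add: fun_eq_iff fps2_add_def)

lemma key:
  assumes d: "3 \<le> m + n" and low: "\<forall>i j. i + j \<le> 2 \<longrightarrow> z i j = Lz a b i j"
    and agree: "\<forall>i j. i + j < m + n \<longrightarrow> A i j = z i j"
    and high: "\<forall>i j. m + n \<le> i + j \<longrightarrow> A i j = 0"
  shows "E z m n = E A m n + 2 * (a * real m - b * real n) * z m n"
proof -
  define L where "L = Lz a b"
  define W where "W = (\<lambda>i j. z i j - L i j)"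
  define V where "V = (\<lambda>i j. A i j - L i j)"
  define U where "U = (\<lambda>i j. z i j - A i j)"
  have B1: "\<And>g. B L g m n = (a * real m - b * real n) * g m n" unfolding L_def by (rule BL)
  have B2: "\<And>g. B g L m n = (a * real m - b * real n) * g m n" unfolding L_def by (rule BL')
  have hz: "z = fps2_add L W" unfolding W_def by (simp add: add_split)
  have hA: "A = fps2_add L V" unfolding V_def by (simp add: add_split)
  have hW: "W = fps2_add V U" unfolding W_def V_def U_def by (simp add: fun_eq_iff fps2_add_def)
  have sV: "sg 3 V" unfolding sg_def V_def L_def using low agree d by auto
  have sU: "sg (m + n) U" unfolding sg_def U_def using agree by auto
  have Lmn: "L m n = 0" unfolding L_def using d by (simp add: Lz_zero)
  have Amn: "A m n = 0" using high by simp
  have e1: "E W m n = E V m n + B V U m n + B U V m n + E U m n"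
    by (subst hW) (rule E_add)
  have "E U m n = 0" unfolding E_B using sg_B[OF sU sU, of m n] d by simp
  moreover have "B V U m n = 0" "B U V m n = 0" using sg_B[OF sV sU, of m n] sg_B[OF sU sV, of m n] by simp_all
  ultimately have eW: "E W m n = E V m n" using e1 by simp
  have e2: "E z m n = E L m n + B L W m n + B W L m n + E W m n"
    by (subst hz) (rule E_add)
  have e3: "E A m n = E L m n + B L V m n + B V L m n + E V m n"
    by (subst hA) (rule E_add)
  show ?thesis using e2 e3 eW unfolding B1 B2 W_def V_def using Lmn Amn by (simp add: algebra_simps)
qed

lemma lowE:
  assumes low: "\<forall>i j. i + j \<le> 2 \<longrightarrow> z i j = Lz a b i j" and mn: "m + n \<le> 2"
  shows "E z m n = E (Lz a b) m n"
proof -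
  define L where "L = Lz a b"
  define W where "W = (\<lambda>i j. z i j - L i j)"
  have B1: "\<And>g. B L g m n = (a * real m - b * real n) * g m n" unfolding L_def by (rule BL)
  have B2: "\<And>g. B g L m n = (a * real m - b * real n) * g m n" unfolding L_def by (rule BL')
  have hz: "z = fps2_add L W" unfolding W_def by (simp add: add_split)
  have sW: "sg 3 W" unfolding sg_def W_def L_def using low by auto
  have Wmn: "W m n = 0" using sW mn by (simp add: sg_def)
  have e2: "E z m n = E L m n + B L W m n + B W L m n + E W m n"
    by (subst hz) (rule E_add)
  have "E W m n = 0" unfolding E_B using sg_B[OF sW sW, of m n] mn by simp
  then show ?thesis using e2 B1[of W] B2[of W] Wmn by (simp add: L_def)
qed

lemma nonzero:
  assumes "rat_lin_indep2 a b" "3 \<le> m + n"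
  shows "a * real m - b * real n \<noteq> 0"
proof
  assume "a * real m - b * real n = 0"
  then have "of_rat (of_nat m) * a + of_rat (- of_nat n) * b = 0"
    by (simp add: of_rat_minus algebra_simps)
  then have "(of_nat m :: rat) = 0 \<and> (- of_nat n :: rat) = 0"
    using assms(1) unfolding rat_lin_indep2_def by blast
  then show False using assms(2) by simp
qed

primrec Zr :: "real \<Rightarrow> real \<Rightarrow> fps2 \<Rightarrow> nat \<Rightarrow> fps2" where
  "Zr a b h 0 = Lz a b"
| "Zr a b h (Suc d) = (\<lambda>i j. if i + j = d \<and> 3 \<le> d
      then (h i j - E (Zr a b h d) i j) / (2 * (a * real i - b * real j)) else Zr a b h d i j)"

lemma Z_low: "i + j < 3 \<Longrightarrow> Zr a b h d i j = Lz a b i j"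
  by (induction d) auto

lemma Z_high: "3 \<le> i + j \<Longrightarrow> d \<le> i + j \<Longrightarrow> Zr a b h d i j = 0"
  by (induction d) (auto simp: Lz_zero)

lemma Z_stable: "i + j < d \<Longrightarrow> Zr a b h (d + k) i j = Zr a b h d i j"
  by (induction k) auto

lemma lowpart:
  "(z 2 0 = a / 2 \<and> z 0 2 = - b / 2 \<and>
     (\<forall>m n. m + n \<le> 2 \<longrightarrow> (m, n) \<noteq> (2, 0) \<longrightarrow> (m, n) \<noteq> (0, 2) \<longrightarrow> z m n = 0))
   \<longleftrightarrow> (\<forall>i j. i + j \<le> 2 \<longrightarrow> z i j = Lz a b i j)" (is "?l \<longleftrightarrow> ?r")
proof
  assume l: ?l
  show ?r
  proof (intro allI impI)
    fix i j :: nat assume ij: "i + j \<le> 2"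
    show "z i j = Lz a b i j"
    proof (cases "(i, j) = (2, 0)")
      case True then show ?thesis using l by (simp add: Lz_def)
    next
      case F1: False
      show ?thesis
      proof (cases "(i, j) = (0, 2)")
        case True then show ?thesis using l by (simp add: Lz_def)
      next
        case False
        then have "z i j = 0" using l ij F1 by blast
        moreover have "Lz a b i j = 0" using False F1 by (auto simp: Lz_def)
        ultimately show ?thesis by simp
      qed
    qed
  qed
next
  assume r: ?r
  have "z 2 0 = a / 2" using r[rule_format, of 2 0] by (simp add: Lz_def)
  moreover have "z 0 2 = - b / 2" using r[rule_format, of 0 2] by (simp add: Lz_def)
  moreover have "\<forall>m n. m + n \<le> 2 \<longrightarrow> (m, n) \<noteq> (2, 0) \<longrightarrow> (m, n) \<noteq> (0, 2) \<longrightarrow> z m n = 0"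
  proof (intro allI impI)
    fix m n :: nat assume "m + n \<le> 2" "(m, n) \<noteq> (2, 0)" "(m, n) \<noteq> (0, 2)"
    then show "z m n = 0" using r[rule_format, of m n] by (auto simp: Lz_def)
  qed
  ultimately show ?l by blast
qed


theorem theorem4p2:
  fixes a b :: real and h :: fps2
  assumes "a > 0" and "b > 0" and "rat_lin_indep2 a b"
    and "h 2 0 = a ^ 2" and "h 0 2 = b ^ 2"
    and "\<And>m n. m + n \<le> 2 \<Longrightarrow> (m, n) \<noteq> (2, 0) \<Longrightarrow> (m, n) \<noteq> (0, 2) \<Longrightarrow> h m n = 0"
  shows "\<exists>!z :: fps2.
           z 2 0 = a / 2 \<and> z 0 2 = - b / 2 \<and>
           (\<forall>m n. m + n \<le> 2 \<longrightarrow> (m, n) \<noteq> (2, 0) \<longrightarrow> (m, n) \<noteq> (0, 2) \<longrightarrow> z m n = 0) \<and>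
           fps2_add (fps2_mult (fps2_dx z) (fps2_dx z)) (fps2_mult (fps2_dy z) (fps2_dy z)) = h"
proof -
  have Edef: "\<And>z. fps2_add (fps2_mult (fps2_dx z) (fps2_dx z)) (fps2_mult (fps2_dy z) (fps2_dy z)) = E z"
    by (simp add: E_def)
  have hlow: "\<And>m n. m + n \<le> 2 \<Longrightarrow> h m n = E (Lz a b) m n"
  proof -
    fix m n :: nat assume mn: "m + n \<le> 2"
    show "h m n = E (Lz a b) m n"
      using assms(4,5) assms(6)[OF mn] unfolding EL by auto
  qed
  define P where "P z \<longleftrightarrow> (\<forall>i j. i + j \<le> 2 \<longrightarrow> z i j = Lz a b i j) \<and> E z = h" for z
  have uniq: "z = w" if Pz: "P z" and Pw: "P w" for z w
  proof -
    have "\<forall>m n. m + n = d \<longrightarrow> z m n = w m n" for d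
    proof (induction d rule: less_induct)
      case (less d)
      show ?case
      proof (intro allI impI)
        fix m n assume mn: "m + n = d"
        show "z m n = w m n"
        proof (cases "d \<le> 2")
          case True then show ?thesis using Pz Pw mn unfolding P_def by auto
        next
          case False
          define A where "A = (\<lambda>i j. if i + j < d then z i j else 0)"
          have k1: "E z m n = E A m n + 2 * (a * real m - b * real n) * z m n"
            by (rule key) (use False mn Pz in \<open>auto simp: A_def P_def\<close>)
          have k2: "E w m n = E A m n + 2 * (a * real m - b * real n) * w m n"
            by (rule key) (use False mn Pw less in \<open>auto simp: A_def P_def\<close>)
          have nz: "a * real m - b * real n \<noteq> 0" using nonzero[OF assms(3)] False mn by auto
          have "E z m n = E w m n" using Pz Pw by (simp add: P_def)
          then show ?thesis using k1 k2 nz by simp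
        qed
      qed
    qed
    then show ?thesis by blast
  qed
  define z where "z = (\<lambda>i j. Zr a b h (i + j + 1) i j)"
  have zlow: "\<forall>i j. i + j \<le> 2 \<longrightarrow> z i j = Lz a b i j"
    by (auto simp: z_def Z_low)
  have "E z m n = h m n" for m n
  proof (cases "m + n \<le> 2")
    case True then show ?thesis using lowE[OF zlow True] hlow by simp
  next
    case False
    define d where "d = m + n"
    have ag: "\<forall>i j. i + j < d \<longrightarrow> Zr a b h d i j = z i j"
    proof (intro allI impI)
      fix i j :: nat assume "i + j < d"
      then have "Zr a b h ((i + j + 1) + (d - (i + j + 1))) i j = Zr a b h (i + j + 1) i j"
        by (intro Z_stable) simp
      then show "Zr a b h d i j = z i j" using \<open>i + j < d\<close> by (simp add: z_def)
    qed
    have k: "E z m n = E (Zr a b h d) m n + 2 * (a * real m - b * real n) * z m n"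
      by (rule key) (use False zlow ag in \<open>auto simp: d_def intro: Z_high\<close>)
    have nz: "a * real m - b * real n \<noteq> 0" using nonzero[OF assms(3)] False by auto
    have "z m n = (h m n - E (Zr a b h d) m n) / (2 * (a * real m - b * real n))"
      using False by (simp add: z_def d_def)
    then show ?thesis using k nz by simp
  qed
  then have Pz: "P z" using zlow by (auto simp: P_def fun_eq_iff)
  have "\<exists>!z. P z" using Pz uniq by blast
  moreover have eq: "\<And>z. (z 2 0 = a / 2 \<and> z 0 2 = - b / 2 \<and>
           (\<forall>m n. m + n \<le> 2 \<longrightarrow> (m, n) \<noteq> (2, 0) \<longrightarrow> (m, n) \<noteq> (0, 2) \<longrightarrow> z m n = 0) \<and>
           E z = h) \<longleftrightarrow> P z"
    unfolding P_def using lowpart by blast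
  ultimately show ?thesis unfolding Edef eq by blast
qed

end
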